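(* Let $H$ be a complex Hilbert space, $A\in B(H)$ a nonzero positive semidefinite operator, and $T\in B_{A^{1/2}}(H)$ with $TA^{1/2}=A^{1/2}T$. Then $r_A(T)=r_A(T^{\diamond})$.
   Context: $\|x\|_A=\langle Ax,x\rangle^{1/2}$. For $S\in B(H)$, $\|S\|_A=\sup\{\|Sx\|_A : x\in\overline{R(A)},\ \|x\|_A=1\}$. $B_{A^{1/2}}(H)=\{S\in B(H): R(S^*A^{1/2})\subset R(A^{1/2})\}$. For $S\in B_{A^{1/2}}(H)$, $S^{\diamond}$ is the unique operator in $B(H)$ with $S^*A^{1/2}=A^{1/2}S^{\diamond}$ and $R(S^{\diamond})\subset\overline{R(A^{1/2})}$; $S^\diamond\in B_{A^{1/2}}(H)$. $r_A(S)=\lim_{n\to\infty}\|S^n\|_A^{1/n}$. *)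

theory Defs
  imports "HOL-Analysis.Analysis"
begin

class complex_vector = real_vector +
  fixes scaleC :: "complex \<Rightarrow> 'a \<Rightarrow> 'a"
  assumes scaleC_add_right: "scaleC a (x + y) = scaleC a x + scaleC a y"
    and scaleC_add_left: "scaleC (a + b) x = scaleC a x + scaleC b x"
    and scaleC_scaleC: "scaleC a (scaleC b x) = scaleC (a * b) x"
    and scaleC_one: "scaleC 1 x = x"
    and scaleR_scaleC: "scaleR r x = scaleC (complex_of_real r) x"

class complex_inner = complex_vector + real_normed_vector +
  fixes cinner :: "'a \<Rightarrow> 'a \<Rightarrow> complex"
  assumes cinner_commute: "cinner x y = cnj (cinner y x)"
    and cinner_add_left: "cinner (x + y) z = cinner x z + cinner y z"
    and cinner_scaleC_left: "cinner (scaleC c x) y = cnj c * cinner x y"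
    and cinner_self_real: "Im (cinner x x) = 0"
    and cinner_self_nonneg: "0 \<le> Re (cinner x x)"
    and cinner_self_eq_zero: "cinner x x = 0 \<longleftrightarrow> x = 0"
    and norm_eq_sqrt_cinner: "norm x = sqrt (Re (cinner x x))"

class chilbert_space = complex_inner + complete_space

definition bounded_clinear :: "('a::complex_inner \<Rightarrow> 'a) \<Rightarrow> bool" where
  "bounded_clinear S \<longleftrightarrow>
     (\<forall>x y. S (x + y) = S x + S y) \<and> (\<forall>c x. S (scaleC c x) = scaleC c (S x)) \<and>
     (\<exists>K. \<forall>x. norm (S x) \<le> norm x * K)"

definition cadjoint :: "('a::complex_inner \<Rightarrow> 'a) \<Rightarrow> ('a \<Rightarrow> 'a)" where
  "cadjoint S = (SOME S'. \<forall>x y. cinner (S x) y = cinner x (S' y))"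

definition pos_op :: "('a::complex_inner \<Rightarrow> 'a) \<Rightarrow> bool" where
  "pos_op A \<longleftrightarrow> bounded_clinear A \<and>
     (\<forall>x. Im (cinner (A x) x) = 0 \<and> 0 \<le> Re (cinner (A x) x))"

definition op_sqrt :: "('a::complex_inner \<Rightarrow> 'a) \<Rightarrow> ('a \<Rightarrow> 'a)" where
  "op_sqrt A = (THE B. pos_op B \<and> B \<circ> B = A)"

definition normA :: "('a::complex_inner \<Rightarrow> 'a) \<Rightarrow> 'a \<Rightarrow> real" where
  "normA A x = sqrt (Re (cinner (A x) x))"

definition opnormA :: "('a::complex_inner \<Rightarrow> 'a) \<Rightarrow> ('a \<Rightarrow> 'a) \<Rightarrow> real" where
  "opnormA A S = Sup {normA A (S x) | x. x \<in> closure (range A) \<and> normA A x = 1}"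

definition in_BA_half :: "('a::complex_inner \<Rightarrow> 'a) \<Rightarrow> ('a \<Rightarrow> 'a) \<Rightarrow> bool" where
  "in_BA_half A S \<longleftrightarrow> bounded_clinear S \<and>
     range (cadjoint S \<circ> op_sqrt A) \<subseteq> range (op_sqrt A)"

definition diamond :: "('a::complex_inner \<Rightarrow> 'a) \<Rightarrow> ('a \<Rightarrow> 'a) \<Rightarrow> ('a \<Rightarrow> 'a)" where
  "diamond A S = (THE S'. bounded_clinear S' \<and> cadjoint S \<circ> op_sqrt A = op_sqrt A \<circ> S' \<and>
                       range S' \<subseteq> closure (range (op_sqrt A)))"

definition rA :: "('a::complex_inner \<Rightarrow> 'a) \<Rightarrow> ('a \<Rightarrow> 'a) \<Rightarrow> real" where
  "rA A S = lim (\<lambda>n. root n (opnormA A (S ^^ n)))"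

end

theory Submission
  imports Defs
begin

subclass (in chilbert_space) banach ..

lemma scaleC_zero_left[simp]: "scaleC 0 (x::'a::complex_vector) = 0"
  using scaleR_scaleC[of 0 x] by simp
lemma scaleC_zero_right[simp]: "scaleC a (0::'a::complex_vector) = 0"
proof -
  have "scaleC a (0::'a) + scaleC a 0 = scaleC a 0 + 0" using scaleC_add_right[of a "0::'a" 0] by simp
  then show ?thesis by simp
qed
lemma scaleC_minus_right: "scaleC a (- x) = - scaleC a (x::'a::complex_vector)"
proof -
  have "scaleC a x + scaleC a (-x) = 0" using scaleC_add_right[of a x "-x"] by simp
  then show ?thesis by (metis minus_unique)
qed
lemma scaleC_diff_right: "scaleC a (x - y) = scaleC a x - scaleC a (y::'a::complex_vector)"
  using scaleC_add_right[of a x "-y"] scaleC_minus_right[of a y] by simp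
lemma scaleC_of_real: "scaleC (complex_of_real r) (x::'a::complex_vector) = scaleR r x"
  by (rule scaleR_scaleC[symmetric])
lemma scaleC_minus_left: "scaleC (- a) x = - scaleC a (x::'a::complex_vector)"
proof -
  have "scaleC a x + scaleC (-a) x = 0" using scaleC_add_left[of a "-a" x] by simp
  then show ?thesis by (metis minus_unique)
qed
lemma scaleC_diff_left: "scaleC (a - b) x = scaleC a x - scaleC b (x::'a::complex_vector)"
  using scaleC_add_left[of a "-b" x] scaleC_minus_left[of b x] by simp

lemma cinner_add_right: "cinner x (y + z) = cinner x y + cinner (x::'a::complex_inner) z"
  by (metis cinner_commute cinner_add_left complex_cnj_add)
lemma cinner_scaleC_right: "cinner x (scaleC c y) = c * cinner (x::'a::complex_inner) y"
  by (metis cinner_commute cinner_scaleC_left complex_cnj_mult complex_cnj_cnj)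
lemma cinner_zero_left[simp]: "cinner 0 (y::'a::complex_inner) = 0"
  using cinner_scaleC_left[of 0 0 y] by simp
lemma cinner_zero_right[simp]: "cinner (x::'a::complex_inner) 0 = 0"
  using cinner_scaleC_right[of x 0 0] by simp
lemma cinner_minus_left: "cinner (- x) y = - cinner (x::'a::complex_inner) y"
  using cinner_add_left[of x "-x" y] by (simp add: minus_unique)
lemma cinner_minus_right: "cinner x (- y) = - cinner (x::'a::complex_inner) y"
  using cinner_add_right[of x y "-y"] by (simp add: minus_unique)
lemma cinner_diff_left: "cinner (x - y) z = cinner x z - cinner (y::'a::complex_inner) z"
  using cinner_add_left[of x "-y" z] cinner_minus_left[of y z] by simp
lemma cinner_diff_right: "cinner x (y - z) = cinner x y - cinner (x::'a::complex_inner) z"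
  using cinner_add_right[of x y "-z"] cinner_minus_right[of x z] by simp
lemma cinner_scaleR_left: "cinner (scaleR r x) y = of_real r * cinner (x::'a::complex_inner) y"
  by (simp add: scaleR_scaleC cinner_scaleC_left)
lemma cinner_scaleR_right: "cinner x (scaleR r y) = of_real r * cinner (x::'a::complex_inner) y"
  by (simp add: scaleR_scaleC cinner_scaleC_right)
lemma cinner_self: "cinner x x = complex_of_real ((norm (x::'a::complex_inner))\<^sup>2)"
proof -
  have "Re (cinner x x) = (norm x)\<^sup>2" using norm_eq_sqrt_cinner[of x] cinner_self_nonneg[of x] by simp
  then show ?thesis using cinner_self_real[of x] by (simp add: complex_eq_iff)
qed
lemma Re_cinner_self: "Re (cinner x x) = (norm (x::'a::complex_inner))\<^sup>2"
  by (simp add: cinner_self)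


lemma bcl_add: "bounded_clinear S \<Longrightarrow> S (x + y) = S x + S y"
  by (simp add: bounded_clinear_def)
lemma bcl_scaleC: "bounded_clinear S \<Longrightarrow> S (scaleC c x) = scaleC c (S x)"
  by (simp add: bounded_clinear_def)
lemma bcl_bound: "bounded_clinear S \<Longrightarrow> \<exists>K>0. \<forall>x. norm (S x) \<le> norm x * K"
proof -
  assume "bounded_clinear S"
  then obtain K where K: "\<forall>x. norm (S x) \<le> norm x * K" by (auto simp: bounded_clinear_def)
  have "\<forall>x. norm (S x) \<le> norm x * max K 1"
    by (metis K max.cobounded1 mult_left_mono norm_ge_zero order_trans)
  then show ?thesis by (intro exI[of _ "max K 1"]) auto
qed
lemma bcl_zero[simp]: "bounded_clinear S \<Longrightarrow> S 0 = 0"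
proof -
  assume S: "bounded_clinear S"
  have "S 0 + S 0 = S 0 + 0" using bcl_add[OF S, of 0 0] by simp
  then show ?thesis by simp
qed
lemma bcl_minus: "bounded_clinear S \<Longrightarrow> S (- x) = - S x"
proof -
  assume S: "bounded_clinear S"
  have "S x + S (- x) = 0" using bcl_add[OF S, of x "-x"] S by simp
  then show ?thesis by (metis minus_unique)
qed
lemma bcl_diff: "bounded_clinear S \<Longrightarrow> S (x - y) = S x - S y"
  using bcl_add[of S x "-y"] bcl_minus[of S y] by simp
lemma bcl_scaleR: "bounded_clinear S \<Longrightarrow> S (scaleR r x) = scaleR r (S x)"
  using bcl_scaleC[of S "complex_of_real r" x] by (simp add: scaleC_of_real)
lemma bcl_linear: "bounded_clinear S \<Longrightarrow> bounded_linear S"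
proof -
  assume S: "bounded_clinear S"
  then obtain K where K: "\<forall>x. norm (S x) \<le> norm x * K" by (auto simp: bounded_clinear_def)
  show ?thesis
    by (rule bounded_linear_intro[of S K]) (use S K bcl_add bcl_scaleR in auto)
qed
lemma bcl_cont: "bounded_clinear S \<Longrightarrow> continuous_on X S"
  using bcl_linear linear_continuous_on by blast
lemma bcl_isCont: "bounded_clinear S \<Longrightarrow> isCont S x"
  using bcl_linear linear_continuous_at by blast

lemma bcl_id: "bounded_clinear (\<lambda>x. x)"
  unfolding bounded_clinear_def by (auto intro: exI[of _ 1])
lemma bcl_comp: "bounded_clinear S \<Longrightarrow> bounded_clinear R \<Longrightarrow> bounded_clinear (\<lambda>x. S (R x))"
proof -
  assume S: "bounded_clinear S" and R: "bounded_clinear R"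
  obtain K1 where K1: "K1 > 0" "\<forall>x. norm (S x) \<le> norm x * K1" using bcl_bound[OF S] by auto
  obtain K2 where K2: "K2 > 0" "\<forall>x. norm (R x) \<le> norm x * K2" using bcl_bound[OF R] by auto
  have "norm (S (R x)) \<le> norm x * (K2 * K1)" for x
  proof -
    have "norm (S (R x)) \<le> norm (R x) * K1" using K1 by auto
    also have "\<dots> \<le> (norm x * K2) * K1" using K1 K2 mult_right_mono by auto
    finally show ?thesis by (simp add: mult.assoc)
  qed
  then show ?thesis using S R unfolding bounded_clinear_def by auto
qed
lemma bcl_comp': "bounded_clinear S \<Longrightarrow> bounded_clinear R \<Longrightarrow> bounded_clinear (S \<circ> R)"
  using bcl_comp by (simp add: o_def)
lemma bcl_funpow: "bounded_clinear S \<Longrightarrow> bounded_clinear (S ^^ n)"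
proof (induction n)
  case 0
  then show ?case using bcl_id by (simp add: id_def)
next
  case (Suc n)
  then show ?case using bcl_comp by simp
qed
lemma bcl_intro:
  assumes "\<And>x y. S (x + y) = S x + S y" "\<And>c x. S (scaleC c x) = scaleC c (S x)"
    "\<And>x. norm (S x) \<le> norm x * K"
  shows "bounded_clinear S"
  unfolding bounded_clinear_def using assms by blast
lemma bcl_add_op: "bounded_clinear S \<Longrightarrow> bounded_clinear R \<Longrightarrow> bounded_clinear (\<lambda>x. S x + R x)"
proof -
  assume S: "bounded_clinear S" and R: "bounded_clinear R"
  obtain K1 where K1: "K1 > 0" "\<forall>x. norm (S x) \<le> norm x * K1" using bcl_bound[OF S] by auto
  obtain K2 where K2: "K2 > 0" "\<forall>x. norm (R x) \<le> norm x * K2" using bcl_bound[OF R] by auto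
  show ?thesis
  proof (rule bcl_intro)
    show "norm (S x + R x) \<le> norm x * (K1 + K2)" for x
      using norm_triangle_ineq[of "S x" "R x"] K1 K2 by (smt (verit) distrib_left)
    show "S (x + y) + R (x + y) = S x + R x + (S y + R y)" for x y
      using S R by (simp add: bcl_add)
    show "S (scaleC c x) + R (scaleC c x) = scaleC c (S x + R x)" for c x
      using S R by (simp add: bcl_scaleC scaleC_add_right)
  qed
qed
lemma bcl_scale_op: "bounded_clinear S \<Longrightarrow> bounded_clinear (\<lambda>x. scaleR r (S x))"
proof -
  assume S: "bounded_clinear S"
  obtain K1 where K1: "K1 > 0" "\<forall>x. norm (S x) \<le> norm x * K1" using bcl_bound[OF S] by auto
  show ?thesis
  proof (rule bcl_intro)
    show "norm (scaleR r (S x)) \<le> norm x * (\<bar>r\<bar> * K1)" for x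
      using K1 by (simp add: mult_left_mono mult.left_commute)
    show "scaleR r (S (x + y)) = scaleR r (S x) + scaleR r (S y)" for x y
      using S by (simp add: bcl_add scaleR_add_right)
    show "scaleR r (S (scaleC c x)) = scaleC c (scaleR r (S x))" for c x
      using S by (simp add: bcl_scaleC scaleR_scaleC scaleC_scaleC mult.commute)
  qed
qed
lemma bcl_diff_op: "bounded_clinear S \<Longrightarrow> bounded_clinear R \<Longrightarrow> bounded_clinear (\<lambda>x. S x - R x)"
  using bcl_add_op[of S "\<lambda>x. scaleR (-1) (R x)"] bcl_scale_op[of R "-1"] by simp

lemma pos_hermitian:
  fixes P :: "'a::complex_inner \<Rightarrow> 'a"
  assumes L: "bounded_clinear P" and R: "\<And>x. Im (cinner (P x) x) = 0"
  shows "cinner (P x) y = cinner x (P y)"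
proof -
  define q where "q u v = cinner (P u) v" for u v
  have q1: "Im (q (x + y) (x + y)) = 0" "Im (q (x + scaleC \<i> y) (x + scaleC \<i> y)) = 0"
    "Im (q x x) = 0" "Im (q y y) = 0"
    using R unfolding q_def by auto
  have e1: "q (x + y) (x + y) = q x x + q y y + q x y + q y x"
    unfolding q_def using L by (simp add: bcl_add cinner_add_left cinner_add_right)
  have e2: "q (x + scaleC \<i> y) (x + scaleC \<i> y) = q x x + q y y + \<i> * q x y - \<i> * q y x"
    unfolding q_def using L by (simp add: bcl_add bcl_scaleC cinner_add_left cinner_add_right
        cinner_scaleC_left cinner_scaleC_right algebra_simps)
  have "q y x = cnj (q x y)"
    using q1 e1 e2 by (simp add: complex_eq_iff)
  then have "cinner (P y) x = cnj (cinner (P x) y)" by (simp add: q_def)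
  then show ?thesis by (metis cinner_commute complex_cnj_cnj)
qed

lemma pos_op_hermitian: "pos_op P \<Longrightarrow> cinner (P x) y = cinner x (P y)"
  unfolding pos_op_def using pos_hermitian by blast

lemma quad_disc:
  fixes a b w :: real
  assumes a0: "a \<ge> 0" and b0: "b \<ge> 0" and w0: "w \<ge> 0"
    and key: "\<And>t. 0 \<le> a + 2*t*w + t\<^sup>2*w*b"
  shows "w \<le> a * b"
proof (cases "b > 0")
  case True
  have "0 \<le> a + 2*(-1/b)*w + (-1/b)\<^sup>2*w*b" by (rule key)
  also have "\<dots> = a - w / b" using True by (simp add: field_simps power2_eq_square)
  finally have "w / b \<le> a" by simp
  then show ?thesis using True by (simp add: divide_le_eq mult.commute)
next
  case False
  then have bz: "b = 0" using b0 by auto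
  have "w = 0"
  proof (rule ccontr)
    assume "w \<noteq> 0"
    then have wp: "w > 0" using w0 by simp
    have "0 \<le> a + 2*(-(a+1)/(2*w))*w + (-(a+1)/(2*w))\<^sup>2*w*b" by (rule key)
    also have "\<dots> = -1" using wp bz by (simp add: field_simps)
    finally show False by simp
  qed
  then show ?thesis using bz by simp
qed

lemma gen_CS:
  fixes P :: "'a::complex_inner \<Rightarrow> 'a"
  assumes L: "bounded_clinear P" and H: "\<And>x y. cinner (P x) y = cinner x (P y)"
    and pos: "\<And>x. Im (cinner (P x) x) = 0 \<and> 0 \<le> Re (cinner (P x) x)"
  shows "(cmod (cinner (P x) y))\<^sup>2 \<le> Re (cinner (P x) x) * Re (cinner (P y) y)"
proof -
  define z where "z = cinner (P x) y"
  define a where "a = Re (cinner (P x) x)"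
  define b where "b = Re (cinner (P y) y)"
  define w where "w = (cmod z)\<^sup>2"
  have ca: "cinner (P x) x = of_real a" using pos[of x] by (simp add: a_def complex_eq_iff)
  have cb: "cinner (P y) y = of_real b" using pos[of y] by (simp add: b_def complex_eq_iff)
  have cz: "cinner (P y) x = cnj z"
    unfolding z_def using H by (metis cinner_commute)
  have zz: "z * cnj z = of_real w" unfolding w_def using complex_norm_square[of z] by simp
  have a0: "a \<ge> 0" "b \<ge> 0" using pos a_def b_def by auto
  have key: "0 \<le> a + 2*t*w + t\<^sup>2*w*b" for t :: real
  proof -
    define s where "s = complex_of_real t * cnj z"
    define v where "v = x + scaleC s y"
    have Pv: "P v = P x + scaleC s (P y)" using L by (simp add: v_def bcl_add bcl_scaleC)
    have "cinner (P v) v = cinner (P x) x + s * cinner (P x) y + (cnj s * cinner (P y) x + cnj s * (s * cinner (P y) y))"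
      unfolding Pv by (simp add: v_def cinner_add_left cinner_add_right cinner_scaleC_left cinner_scaleC_right algebra_simps)
    also have "\<dots> = cinner (P x) x + s * z + cnj s * cnj z + cnj s * s * cinner (P y) y"
      unfolding cz z_def by (simp add: mult.assoc)
    also have "\<dots> = of_real a + 2 * of_real t * (z * cnj z) + (of_real t)\<^sup>2 * (z * cnj z) * of_real b"
    proof -
      have cs: "cnj s = of_real t * z" by (simp add: s_def)
      show ?thesis unfolding cs ca cb unfolding s_def power2_eq_square by algebra
    qed
    also have "\<dots> = of_real (a + 2*t*w + t\<^sup>2*w*b)"
      unfolding zz by simp
    finally have "Re (cinner (P v) v) = a + 2*t*w + t\<^sup>2*w*b" by simp
    then show ?thesis using pos[of v] by simp
  qed
  have "w \<le> a * b" by (rule quad_disc[OF a0 _ key]) (simp add: w_def)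
  then show ?thesis by (simp add: w_def z_def a_def b_def)
qed

lemma CS: "cmod (cinner x y) \<le> norm x * norm (y::'a::complex_inner)"
proof -
  have "(cmod (cinner x y))\<^sup>2 \<le> Re (cinner x x) * Re (cinner y y)"
    by (rule gen_CS[of "\<lambda>x. x", OF bcl_id]) (simp_all add: cinner_self_real cinner_self_nonneg)
  also have "\<dots> = (norm x * norm y)\<^sup>2" by (simp only: Re_cinner_self power_mult_distrib)
  finally show ?thesis by (rule power2_le_imp_le) simp
qed

lemma cinner_ext_zero: "(\<And>z. cinner x z = 0) \<Longrightarrow> x = (0::'a::complex_inner)"
  using cinner_self_eq_zero by blast
lemma cinner_ext: "(\<And>z. cinner x z = cinner y z) \<Longrightarrow> x = (y::'a::complex_inner)"
  using cinner_ext_zero[of "x - y"] by (simp add: cinner_diff_left)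
lemma cinner_ext': "(\<And>z. cinner z x = cinner z y) \<Longrightarrow> x = (y::'a::complex_inner)"
  using cinner_ext_zero[of "x - y"] by (metis cinner_diff_left cinner_diff_right cinner_self_eq_zero eq_iff_diff_eq_0)

lemma pos_zero_form:
  fixes P :: "'a::complex_inner \<Rightarrow> 'a"
  assumes "pos_op P" and "Re (cinner (P x) x) = 0"
  shows "P x = 0"
proof -
  have "(cmod (cinner (P x) z))\<^sup>2 \<le> 0" for z
    using gen_CS[of P x z] assms pos_op_hermitian[OF assms(1)] unfolding pos_op_def by auto
  then have "cinner (P x) z = 0" for z by simp
  then show ?thesis by (rule cinner_ext_zero)
qed


lemma norm_scaleC: "norm (scaleC c (x::'a::complex_inner)) = cmod c * norm x"
proof -
  have "(norm (scaleC c x))\<^sup>2 = Re (cinner (scaleC c x) (scaleC c x))" by (simp add: Re_cinner_self)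
  also have "cinner (scaleC c x) (scaleC c x) = cnj c * c * cinner x x" by (simp add: cinner_scaleC_left cinner_scaleC_right mult.assoc)
  also have "cnj c * c = of_real ((cmod c)\<^sup>2)" using complex_norm_square[of c] by (simp add: mult.commute)
  also have "cinner x x = of_real ((norm x)\<^sup>2)" by (rule cinner_self)
  also have "Re (complex_of_real ((cmod c)\<^sup>2) * complex_of_real ((norm x)\<^sup>2)) = (cmod c * norm x)\<^sup>2"
    by (simp add: power_mult_distrib)
  finally show ?thesis by (simp add: power2_eq_iff_nonneg)
qed

lemma bounded_linear_scaleC: "bounded_linear (\<lambda>x::'a::complex_inner. scaleC c x)"
  by (rule bounded_linear_intro[of _ "cmod c"])
     (auto simp: scaleC_add_right scaleR_scaleC scaleC_scaleC mult.commute norm_scaleC)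

lemma bounded_linear_cinner_left: "bounded_linear (\<lambda>v::'a::complex_inner. cinner v y)"
  by (rule bounded_linear_intro[of _ "norm y"])
     (auto simp: cinner_add_left cinner_scaleR_left scaleR_conv_of_real CS)

lemma bounded_linear_cinner_right: "bounded_linear (\<lambda>v::'a::complex_inner. cinner y v)"
  by (rule bounded_linear_intro[of _ "norm y"])
     (auto simp: cinner_add_right cinner_scaleR_right scaleR_conv_of_real, metis CS mult.commute)

lemma tendsto_cinner_left: "(f \<longlongrightarrow> a) F \<Longrightarrow> ((\<lambda>n. cinner (f n) y) \<longlongrightarrow> cinner a (y::'a::complex_inner)) F"
  using bounded_linear.tendsto[OF bounded_linear_cinner_left] by blast
lemma tendsto_cinner_right: "(f \<longlongrightarrow> a) F \<Longrightarrow> ((\<lambda>n. cinner y (f n)) \<longlongrightarrow> cinner (y::'a::complex_inner) a) F"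
  using bounded_linear.tendsto[OF bounded_linear_cinner_right] by blast

definition csubspace :: "'a::complex_vector set \<Rightarrow> bool" where
  "csubspace M \<longleftrightarrow> 0 \<in> M \<and> (\<forall>x\<in>M. \<forall>y\<in>M. x + y \<in> M) \<and> (\<forall>c. \<forall>x\<in>M. scaleC c x \<in> M)"

lemma csubspace_0: "csubspace M \<Longrightarrow> 0 \<in> M"
  by (simp add: csubspace_def)
lemma csubspace_add: "csubspace M \<Longrightarrow> x \<in> M \<Longrightarrow> y \<in> M \<Longrightarrow> x + y \<in> M"
  by (simp add: csubspace_def)
lemma csubspace_scaleC: "csubspace M \<Longrightarrow> x \<in> M \<Longrightarrow> scaleC c x \<in> M"
  by (simp add: csubspace_def)
lemma csubspaceI: "0 \<in> M \<Longrightarrow> (\<And>x y. x \<in> M \<Longrightarrow> y \<in> M \<Longrightarrow> x + y \<in> M) \<Longrightarrow>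
   (\<And>c x. x \<in> M \<Longrightarrow> scaleC c x \<in> M) \<Longrightarrow> csubspace M"
  by (simp add: csubspace_def)

lemma csubspace_diff: "csubspace M \<Longrightarrow> x \<in> M \<Longrightarrow> y \<in> M \<Longrightarrow> x - y \<in> M"
proof -
  assume M: "csubspace M" and xy: "x \<in> M" "y \<in> M"
  have "scaleC (-1) y \<in> M" using M xy(2) by (rule csubspace_scaleC)
  moreover have "scaleC (-1) y = - y" by (simp add: scaleC_minus_left scaleC_one)
  ultimately show ?thesis using csubspace_add[OF M xy(1), of "-y"] by simp
qed

lemma csubspace_closure: "csubspace (M::'a::complex_inner set) \<Longrightarrow> csubspace (closure M)"
proof -
  assume M: "csubspace M"
  have "0 \<in> closure M" using csubspace_0[OF M] closure_subset by blast
  moreover have "x + y \<in> closure M" if xy: "x \<in> closure M" "y \<in> closure M" for x y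
  proof -
    obtain f where f: "\<forall>n. f n \<in> M" "f \<longlonglongrightarrow> x" using xy(1) unfolding closure_sequential by blast
    obtain g where g: "\<forall>n. g n \<in> M" "g \<longlonglongrightarrow> y" using xy(2) unfolding closure_sequential by blast
    have "\<forall>n. f n + g n \<in> M" using f g csubspace_add[OF M] by blast
    moreover have "(\<lambda>n. f n + g n) \<longlonglongrightarrow> x + y" using f g tendsto_add by blast
    ultimately show ?thesis unfolding closure_sequential by (auto intro!: exI[of _ "\<lambda>n. f n + g n"])
  qed
  moreover have "scaleC c x \<in> closure M" if xy: "x \<in> closure M" for c x
  proof -
    obtain f where f: "\<forall>n. f n \<in> M" "f \<longlonglongrightarrow> x" using xy(1) unfolding closure_sequential by blast
    have "\<forall>n. scaleC c (f n) \<in> M" using f csubspace_scaleC[OF M] by blast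
    moreover have "(\<lambda>n. scaleC c (f n)) \<longlonglongrightarrow> scaleC c x"
      using bounded_linear.tendsto[OF bounded_linear_scaleC f(2)] by blast
    ultimately show ?thesis unfolding closure_sequential by (auto intro!: exI[of _ "\<lambda>n. scaleC c (f n)"])
  qed
  ultimately show ?thesis by (intro csubspaceI) auto
qed

lemma csubspace_range: assumes S: "bounded_clinear S" shows "csubspace (range S)"
proof (rule csubspaceI)
  show "0 \<in> range S" using bcl_zero[OF S] by (metis rangeI)
  show "x + y \<in> range S" if xy: "x \<in> range S" "y \<in> range S" for x y
  proof -
    obtain a b where "x = S a" "y = S b" using xy by blast
    then have "x + y = S (a + b)" using bcl_add[OF S] by simp
    then show ?thesis by simp
  qed
  show "scaleC c x \<in> range S" if xy: "x \<in> range S" for c x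
  proof -
    obtain a where "x = S a" using xy by blast
    then have "scaleC c x = S (scaleC c a)" using bcl_scaleC[OF S] by simp
    then show ?thesis by simp
  qed
qed

lemma parallelogram:
  "(norm (a + b))\<^sup>2 + (norm (a - b))\<^sup>2 = 2 * (norm a)\<^sup>2 + 2 * (norm (b::'a::complex_inner))\<^sup>2"
proof -
  have "cinner (a + b) (a + b) + cinner (a - b) (a - b) = 2 * cinner a a + 2 * cinner b b"
    by (simp add: cinner_add_left cinner_add_right cinner_diff_left cinner_diff_right algebra_simps)
  then have "Re (cinner (a + b) (a + b) + cinner (a - b) (a - b)) = Re (2 * cinner a a + 2 * cinner b b)"
    by simp
  then show ?thesis by (simp add: Re_cinner_self)
qed

lemma norm_expand: "(norm (u + scaleC s z))\<^sup>2 =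
   (norm u)\<^sup>2 + 2 * Re (s * cinner u (z::'a::complex_inner)) + (cmod s)\<^sup>2 * (norm z)\<^sup>2"
proof -
  have "cinner (u + scaleC s z) (u + scaleC s z) =
     cinner u u + (s * cinner u z + cnj s * cinner z u) + (cnj s * s) * cinner z z"
    by (simp add: cinner_add_left cinner_add_right cinner_scaleC_left cinner_scaleC_right algebra_simps)
  also have "s * cinner u z + cnj s * cinner z u = s * cinner u z + cnj (s * cinner u z)"
    by (metis cinner_commute complex_cnj_mult)
  also have "\<dots> = of_real (2 * Re (s * cinner u z))" by (rule complex_add_cnj)
  also have "cnj s * s = of_real ((cmod s)\<^sup>2)" using complex_norm_square[of s] by (simp add: mult.commute)
  finally have "Re (cinner (u + scaleC s z) (u + scaleC s z)) = (norm u)\<^sup>2 + 2 * Re (s * cinner u z) + (cmod s)\<^sup>2 * (norm z)\<^sup>2"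
    by (simp add: cinner_self)
  then show ?thesis by (simp add: Re_cinner_self)
qed


lemma proj_exists:
  fixes M :: "'a::chilbert_space set"
  assumes M: "csubspace M" and cl: "closed M"
  shows "\<exists>m\<in>M. \<forall>z\<in>M. cinner z (x - m) = 0"
proof -
  define D where "D = (\<lambda>m. (norm (x - m))\<^sup>2) ` M"
  define dd where "dd = Inf D"
  have Dne: "D \<noteq> {}" using csubspace_0[OF M] unfolding D_def by auto
  have Dbdd: "bdd_below D" unfolding D_def by (rule bdd_belowI[of _ 0]) auto
  have lower: "dd \<le> (norm (x - m))\<^sup>2" if "m \<in> M" for m
    unfolding dd_def using Dbdd that by (auto simp: D_def intro!: cInf_lower)
  have "\<exists>m\<in>M. (norm (x - m))\<^sup>2 < dd + 1 / (real n + 1)" for n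
  proof -
    have "dd < dd + 1 / (real n + 1)" by simp
    then obtain v where "v \<in> D" "v < dd + 1 / (real n + 1)"
      using cInf_lessD[OF Dne] unfolding dd_def by blast
    then show ?thesis unfolding D_def by auto
  qed
  then obtain f where f: "\<And>n. f n \<in> M" "\<And>n. (norm (x - f n))\<^sup>2 < dd + 1 / (real n + 1)"
    by metis
  have half: "scaleR (1/2) (f j + f k) \<in> M" for j k
    using csubspace_add[OF M f(1) f(1)] csubspace_scaleC[OF M] unfolding scaleR_scaleC by blast
  have distb: "(norm (f j - f k))\<^sup>2 \<le> 2 / (real j + 1) + 2 / (real k + 1)" for j k
  proof -
    define h where "h = scaleR (1/2) (f j + f k)"
    have A: "(norm ((x - f j) + (x - f k)))\<^sup>2 + (norm ((x - f j) - (x - f k)))\<^sup>2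
          = 2 * (norm (x - f j))\<^sup>2 + 2 * (norm (x - f k))\<^sup>2" by (rule parallelogram)
    have B: "(x - f j) + (x - f k) = scaleR 2 (x - h)"
      unfolding h_def by (simp add: algebra_simps scaleR_2)
    have C: "(norm ((x - f j) + (x - f k)))\<^sup>2 = 4 * (norm (x - h))\<^sup>2"
      unfolding B by (simp add: power2_eq_square)
    have D: "(norm ((x - f j) - (x - f k)))\<^sup>2 = (norm (f j - f k))\<^sup>2"
      by (simp add: norm_minus_commute)
    have E: "dd \<le> (norm (x - h))\<^sup>2" using lower half unfolding h_def by blast
    have "(norm (f j - f k))\<^sup>2 \<le> 2 * (norm (x - f j))\<^sup>2 + 2 * (norm (x - f k))\<^sup>2 - 4 * dd"
      using A C D E by linarith
    then show ?thesis using f(2)[of j] f(2)[of k] by linarith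
  qed
  have "Cauchy f"
  proof (rule metric_CauchyI)
    fix e :: real assume e: "e > 0"
    obtain N :: nat where N: "4 / e\<^sup>2 < real N" using reals_Archimedean2 by blast
    have e2: "0 < e\<^sup>2" using e by simp
    have "4 < real N * e\<^sup>2" using N e2 by (simp add: field_simps)
    then have "4 < (real N + 1) * e\<^sup>2" using e2 unfolding distrib_right by linarith
    then have "4 / (real N + 1) < e\<^sup>2" by (simp add: divide_less_eq mult.commute)
    show "\<exists>N. \<forall>m\<ge>N. \<forall>n\<ge>N. dist (f m) (f n) < e"
    proof (intro exI allI impI)
      fix j k assume jk: "N \<le> j" "N \<le> k"
      have "2 / (real j + 1) \<le> 2 / (real N + 1)" "2 / (real k + 1) \<le> 2 / (real N + 1)"
        using jk by (auto intro!: divide_left_mono)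
      then have "(norm (f j - f k))\<^sup>2 < e\<^sup>2"
        using distb[of j k] \<open>4 / (real N + 1) < e\<^sup>2\<close> by linarith
      then have "(dist (f j) (f k))\<^sup>2 < e\<^sup>2" by (simp add: dist_norm)
      then show "dist (f j) (f k) < e" by (rule power2_less_imp_less) (use e in auto)
    qed
  qed
  then obtain m where m: "f \<longlonglongrightarrow> m" using Cauchy_convergent_iff convergent_def by blast
  have mM: "m \<in> M" using cl f(1) m closed_sequentially by blast
  have lim1: "(\<lambda>n. (norm (x - f n))\<^sup>2) \<longlonglongrightarrow> (norm (x - m))\<^sup>2"
    by (intro tendsto_intros m)
  have "(\<lambda>n. inverse (real (Suc n))) \<longlonglongrightarrow> 0" by (rule LIMSEQ_inverse_real_of_nat)
  moreover have "(\<lambda>n. inverse (real (Suc n))) = (\<lambda>n. 1 / (real n + 1))"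
    by (simp add: fun_eq_iff inverse_eq_divide add.commute)
  ultimately have "(\<lambda>n. 1 / (real n + 1)) \<longlonglongrightarrow> 0" by simp
  then have lim2: "(\<lambda>n. dd + 1 / (real n + 1)) \<longlonglongrightarrow> dd + 0"
    by (intro tendsto_add tendsto_const)
  have mmin: "(norm (x - m))\<^sup>2 \<le> dd + 0"
    by (rule LIMSEQ_le[OF lim1 lim2]) (use f(2) less_imp_le in auto)
  have "cinner z (x - m) = 0" if z: "z \<in> M" for z
  proof -
    define u where "u = x - m"
    define w where "w = cinner z u"
    have key: "0 \<le> 0 + 2 * t * (cmod w)\<^sup>2 + t\<^sup>2 * (cmod w)\<^sup>2 * (norm z)\<^sup>2" for t :: real
    proof -
      define s where "s = complex_of_real t * w"
      have "scaleC s z \<in> M" using M z by (rule csubspace_scaleC)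
      then have "m - scaleC s z \<in> M" using csubspace_diff[OF M mM] by blast
      moreover have "x - (m - scaleC s z) = u + scaleC s z" by (simp add: u_def)
      ultimately have "dd \<le> (norm (u + scaleC s z))\<^sup>2" using lower by metis
      then have "(norm u)\<^sup>2 \<le> (norm (u + scaleC s z))\<^sup>2"
        using mmin unfolding u_def by linarith
      also have "\<dots> = (norm u)\<^sup>2 + 2 * Re (s * cinner u z) + (cmod s)\<^sup>2 * (norm z)\<^sup>2"
        by (rule norm_expand)
      also have "s * cinner u z = of_real (t * (cmod w)\<^sup>2)"
      proof -
        have "cinner u z = cnj w" unfolding w_def by (rule cinner_commute)
        then have "s * cinner u z = of_real t * (w * cnj w)" by (simp add: s_def mult.assoc)
        also have "w * cnj w = of_real ((cmod w)\<^sup>2)" using complex_norm_square[of w] by simp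
        finally show ?thesis by simp
      qed
      also have "cmod s = \<bar>t\<bar> * cmod w" by (simp add: s_def norm_mult)
      finally have "0 \<le> 2 * (t * (cmod w)\<^sup>2) + (\<bar>t\<bar> * cmod w)\<^sup>2 * (norm z)\<^sup>2" by simp
      then show ?thesis by (simp add: power_mult_distrib mult_ac)
    qed
    have "(cmod w)\<^sup>2 \<le> 0 * (norm z)\<^sup>2" by (rule quad_disc[OF _ _ _ key]) auto
    then show ?thesis by (simp add: w_def u_def)
  qed
  then show ?thesis using mM by blast
qed

definition proj :: "'a::chilbert_space set \<Rightarrow> 'a \<Rightarrow> 'a" where
  "proj M x = (SOME m. m \<in> M \<and> (\<forall>z\<in>M. cinner z (x - m) = 0))"

lemma proj:
  fixes M :: "'a::chilbert_space set"
  assumes "csubspace M" "closed M"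
  shows "proj M x \<in> M" "\<And>z. z \<in> M \<Longrightarrow> cinner z (x - proj M x) = 0"
proof -
  have "\<exists>m. m \<in> M \<and> (\<forall>z\<in>M. cinner z (x - m) = 0)" using proj_exists[OF assms] by blast
  from someI_ex[OF this] show "proj M x \<in> M" "\<And>z. z \<in> M \<Longrightarrow> cinner z (x - proj M x) = 0"
    unfolding proj_def by auto
qed

lemma orth_in_zero: "(\<And>z. z \<in> M \<Longrightarrow> cinner z v = 0) \<Longrightarrow> v \<in> M \<Longrightarrow> v = 0"
  using cinner_self_eq_zero by blast

lemma proj_unique:
  fixes M :: "'a::chilbert_space set"
  assumes "csubspace M" "closed M" "m \<in> M" "\<And>z. z \<in> M \<Longrightarrow> cinner z (x - m) = 0"
  shows "proj M x = m"
proof -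
  have "proj M x - m = 0"
  proof (rule orth_in_zero[of M])
    show "proj M x - m \<in> M" using proj[OF assms(1,2)] assms(3) csubspace_diff[OF assms(1)] by blast
    fix z assume z: "z \<in> M"
    have "proj M x - m = (x - m) - (x - proj M x)" by simp
    then show "cinner z (proj M x - m) = 0"
      using assms(4)[OF z] proj(2)[OF assms(1,2) z] by (simp add: cinner_diff_right)
  qed
  then show ?thesis by simp
qed

lemma proj_bcl:
  fixes M :: "'a::chilbert_space set"
  assumes M: "csubspace M" "closed M"
  shows "bounded_clinear (proj M)"
proof (rule bcl_intro)
  note P = proj[OF M]
  show "proj M (x + y) = proj M x + proj M y" for x y
  proof (rule proj_unique[OF M])
    show "proj M x + proj M y \<in> M" using P csubspace_add[OF M(1)] by blast
    fix z assume z: "z \<in> M"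
    have eq: "x + y - (proj M x + proj M y) = (x - proj M x) + (y - proj M y)" by simp
    show "cinner z (x + y - (proj M x + proj M y)) = 0"
      unfolding eq cinner_add_right using P(2)[OF z, of x] P(2)[OF z, of y] by simp
  qed
  show "proj M (scaleC c x) = scaleC c (proj M x)" for c x
  proof (rule proj_unique[OF M])
    show "scaleC c (proj M x) \<in> M" using P csubspace_scaleC[OF M(1)] by blast
    fix z assume z: "z \<in> M"
    have "scaleC c x - scaleC c (proj M x) = scaleC c (x - proj M x)" by (simp add: scaleC_diff_right)
    then show "cinner z (scaleC c x - scaleC c (proj M x)) = 0"
      using P(2)[OF z] by (simp add: cinner_scaleC_right)
  qed
  show "norm (proj M x) \<le> norm x * 1" for x
  proof -
    have "x = proj M x + scaleC 1 (x - proj M x)" by (simp add: scaleC_one)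
    then have "(norm x)\<^sup>2 = (norm (proj M x))\<^sup>2 + 2 * Re (1 * cinner (proj M x) (x - proj M x)) + (cmod 1)\<^sup>2 * (norm (x - proj M x))\<^sup>2"
      by (metis norm_expand)
    also have "cinner (proj M x) (x - proj M x) = 0" using P by blast
    finally have "(norm (proj M x))\<^sup>2 \<le> (norm x)\<^sup>2" by simp
    then have "norm (proj M x) \<le> norm x" by (rule power2_le_imp_le) simp
    then show ?thesis by simp
  qed
qed


lemma riesz_adj:
  fixes T :: "'a::chilbert_space \<Rightarrow> 'a"
  assumes T: "bounded_clinear T"
  shows "\<exists>z. \<forall>x. cinner (T x) y = cinner x z"
proof -
  define f where "f x = cinner (T x) y" for x
  have fadd: "f (a + b) = f a + f b" for a b by (simp add: f_def bcl_add[OF T] cinner_add_left)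
  have fscale: "f (scaleC c a) = cnj c * f a" for c a by (simp add: f_def bcl_scaleC[OF T] cinner_scaleC_left)
  have fdiff: "f (a - b) = f a - f b" for a b by (simp add: f_def bcl_diff[OF T] cinner_diff_left)
  define N where "N = {x. f x = 0}"
  have NS: "csubspace N"
  proof (rule csubspaceI)
    show "0 \<in> N" using T by (simp add: N_def f_def)
    show "a + b \<in> N" if "a \<in> N" "b \<in> N" for a b using that by (simp add: N_def fadd)
    show "scaleC c a \<in> N" if "a \<in> N" for c a using that by (simp add: N_def fscale)
  qed
  have "bounded_linear f"
    unfolding f_def using bounded_linear_compose[OF bounded_linear_cinner_left bcl_linear[OF T]] .
  then have "continuous_on UNIV f" by (rule linear_continuous_on)
  then have NC: "closed N" unfolding N_def by (intro closed_Collect_eq) auto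
  show ?thesis
  proof (cases "N = UNIV")
    case True
    then show ?thesis by (intro exI[of _ 0]) (auto simp: N_def f_def set_eq_iff)
  next
    case False
    then obtain x0 where x0: "x0 \<notin> N" by blast
    define u where "u = x0 - proj N x0"
    have uorth: "cinner n u = 0" if "n \<in> N" for n using proj(2)[OF NS NC that] by (simp add: u_def)
    have fu: "f u \<noteq> 0"
    proof
      assume "f u = 0"
      then have "u \<in> N" by (simp add: N_def)
      then have "u = 0" using uorth cinner_self_eq_zero by blast
      then have "x0 \<in> N" using proj(1)[OF NS NC, of x0] by (simp add: u_def)
      then show False using x0 by simp
    qed
    have uu: "cinner u u \<noteq> 0"
    proof
      assume "cinner u u = 0"
      then have "u = 0" by (simp add: cinner_self_eq_zero)
      then show False using fu by (simp add: f_def T)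
    qed
    define z where "z = scaleC (f u / cinner u u) u"
    have "cinner (T x) y = cinner x z" for x
    proof -
      define c where "c = cnj (f x / f u)"
      have "f (x - scaleC c u) = 0" using fu by (simp add: fdiff fscale c_def)
      then have "cinner (x - scaleC c u) u = 0" using uorth by (simp add: N_def)
      then have "cinner x u = cnj c * cinner u u"
        by (simp add: cinner_diff_left cinner_scaleC_left)
      then have "cinner x u = (f x / f u) * cinner u u" by (simp add: c_def)
      then have "cinner x z = f x" using fu uu by (simp add: z_def cinner_scaleC_right)
      then show ?thesis by (simp add: f_def)
    qed
    then show ?thesis by blast
  qed
qed

lemma adjoint:
  fixes T :: "'a::chilbert_space \<Rightarrow> 'a"
  assumes T: "bounded_clinear T"
  shows "cinner (T x) y = cinner x (cadjoint T y)"
proof -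
  have "\<forall>y. \<exists>z. \<forall>x. cinner (T x) y = cinner x z" using riesz_adj[OF T] by blast
  then have "\<exists>S. \<forall>y. \<forall>x. cinner (T x) y = cinner x (S y)" by (rule choice)
  then have "\<exists>S. \<forall>x y. cinner (T x) y = cinner x (S y)" by blast
  from someI_ex[OF this] show ?thesis unfolding cadjoint_def by blast
qed

lemma adjoint_bcl:
  fixes T :: "'a::chilbert_space \<Rightarrow> 'a"
  assumes T: "bounded_clinear T"
  shows "bounded_clinear (cadjoint T)"
proof -
  note A = adjoint[OF T]
  obtain K where K: "K > 0" "\<forall>x. norm (T x) \<le> norm x * K" using bcl_bound[OF T] by blast
  show ?thesis
  proof (rule bcl_intro)
    show "cadjoint T (a + b) = cadjoint T a + cadjoint T b" for a b
      by (rule cinner_ext') (simp add: A[symmetric] cinner_add_right)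
    show "cadjoint T (scaleC c a) = scaleC c (cadjoint T a)" for c a
      by (rule cinner_ext') (simp add: A[symmetric] cinner_scaleC_right)
    show "norm (cadjoint T a) \<le> norm a * K" for a
    proof -
      define v where "v = cadjoint T a"
      have "(norm v)\<^sup>2 = Re (cinner v v)" by (simp add: Re_cinner_self)
      also have "cinner v v = cinner (T v) a" by (simp add: A v_def)
      also have "Re (cinner (T v) a) \<le> cmod (cinner (T v) a)" by (rule complex_Re_le_cmod)
      also have "\<dots> \<le> norm (T v) * norm a" by (rule CS)
      also have "\<dots> \<le> (norm v * K) * norm a" using K by (simp add: mult_right_mono)
      finally have "norm v * norm v \<le> norm v * (norm a * K)" by (simp add: power2_eq_square mult_ac)
      then show ?thesis unfolding v_def[symmetric]
        using K by (cases "norm v = 0") (auto simp: mult_le_cancel_left)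
    qed
  qed
qed

lemma adjoint_unique:
  fixes T :: "'a::chilbert_space \<Rightarrow> 'a"
  assumes T: "bounded_clinear T" and R: "\<And>x y. cinner (T x) y = cinner x (R y)"
  shows "cadjoint T = R"
proof
  fix y show "cadjoint T y = R y"
    by (rule cinner_ext') (simp add: adjoint[OF T, symmetric] R)
qed


fun sqc :: "nat \<Rightarrow> real" where
  "sqc k = (if k = 0 then 0 else if k = 1 then 1/2 else (1/2) * (\<Sum>i\<in>{1..<k}. sqc i * sqc (k - i)))"

declare sqc.simps[simp del]

lemma sqc_0[simp]: "sqc 0 = 0" by (simp add: sqc.simps)
lemma sqc_1[simp]: "sqc 1 = 1/2" by (simp add: sqc.simps)
lemma sqc_Suc0[simp]: "sqc (Suc 0) = 1/2" by (simp add: sqc.simps)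

lemma sqc_nonneg: "0 \<le> sqc k"
proof (induction k rule: less_induct)
  case (less k)
  then show ?case
    by (subst sqc.simps) (auto intro!: sum_nonneg mult_nonneg_nonneg)
qed

lemma sqc_conv: "(\<Sum>i\<le>k. sqc i * sqc (k - i)) = 2 * sqc k - (if k = 1 then 1 else 0)"
proof (cases "k \<le> 1")
  case True
  then have "k = 0 \<or> k = 1" by auto
  then show ?thesis by auto
next
  case False
  have split: "{..k} = insert 0 (insert k {1..<k})" using False by auto
  have "(\<Sum>i\<le>k. sqc i * sqc (k - i)) = (\<Sum>i\<in>{1..<k}. sqc i * sqc (k - i))"
    unfolding split using False by (simp add: sum.insert)
  also have "\<dots> = 2 * sqc k" using False by (subst (2) sqc.simps) simp
  finally show ?thesis using False by simp
qed

definition sqs :: "nat \<Rightarrow> real" where "sqs n = (\<Sum>k<n. sqc k)"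

lemma sqs_nonneg: "0 \<le> sqs n" unfolding sqs_def by (intro sum_nonneg sqc_nonneg)

lemma sqs_triangle: "(\<Sum>(i,j)\<in>{(i,j). i+j < n}. sqc i * sqc j) \<le> (sqs (n - 1))\<^sup>2"
proof -
  define A where "A = {(i,j). i+j < n}"
  define B where "B = {..<n-1} \<times> {..<n-1}"
  have finA: "finite A"
  proof -
    have "A \<subseteq> {..<n} \<times> {..<n}" by (auto simp: A_def)
    then show ?thesis by (rule finite_subset) auto
  qed
  have "(\<Sum>(i,j)\<in>A. sqc i * sqc j) = (\<Sum>(i,j)\<in>A \<inter> B. sqc i * sqc j)"
  proof (rule sum.mono_neutral_right[OF finA])
    show "A \<inter> B \<subseteq> A" by blast
    show "\<forall>x\<in>A - A \<inter> B. (case x of (i, j) \<Rightarrow> sqc i * sqc j) = 0"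
    proof
      fix x assume x: "x \<in> A - A \<inter> B"
      obtain i j where ij: "x = (i,j)" by (cases x)
      have "i = 0 \<or> j = 0" using x ij by (auto simp: A_def B_def)
      then show "(case x of (i, j) \<Rightarrow> sqc i * sqc j) = 0" using ij by auto
    qed
  qed
  also have "\<dots> \<le> (\<Sum>(i,j)\<in>B. sqc i * sqc j)"
    by (rule sum_mono2) (auto simp: B_def intro!: mult_nonneg_nonneg sqc_nonneg)
  also have "\<dots> = (sqs (n - 1))\<^sup>2"
    unfolding B_def sqs_def power2_eq_square sum_product sum.cartesian_product by simp
  finally show ?thesis unfolding A_def .
qed

lemma sqs_le1: "sqs n \<le> 1"
proof (induction n rule: less_induct)
  case (less n)
  show ?case
  proof (cases "n < 2")
    case True
    then have "n = 0 \<or> n = 1" by auto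
    then show ?thesis by (auto simp: sqs_def)
  next
    case False
    have "(\<Sum>(i,j)\<in>{(i,j). i+j < n}. sqc i * sqc j) = (\<Sum>k<n. \<Sum>i\<le>k. sqc i * sqc (k - i))"
      by (rule sum.triangle_reindex)
    also have "\<dots> = (\<Sum>k<n. 2 * sqc k - (if k = 1 then 1 else 0))"
      by (simp add: sqc_conv)
    also have "\<dots> = 2 * sqs n - 1"
      using False by (simp add: sum_subtractf sum_distrib_left[symmetric] sqs_def)
    finally have "2 * sqs n - 1 \<le> (sqs (n - 1))\<^sup>2" using sqs_triangle[of n] by simp
    moreover have "sqs (n - 1) \<le> 1" using less False by simp
    moreover have "(sqs (n - 1))\<^sup>2 \<le> 1" using calculation(2) sqs_nonneg[of "n - 1"]
      by (simp add: power_le_one)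
    ultimately show ?thesis by simp
  qed
qed

lemma sqc_sum_le: "finite F \<Longrightarrow> sum sqc F \<le> 1"
proof -
  assume F: "finite F"
  obtain n where "F \<subseteq> {..<n}"
    using F by (metis finite_nat_bounded)
  then have "sum sqc F \<le> sum sqc {..<n}" by (intro sum_mono2) (auto intro: sqc_nonneg)
  also have "\<dots> \<le> 1" using sqs_le1[of n] by (simp add: sqs_def)
  finally show ?thesis .
qed

lemma sqc_summable: "sqc summable_on UNIV"
  by (rule nonneg_bdd_above_summable_on) (auto intro: sqc_nonneg sqc_sum_le bdd_aboveI2[of _ _ 1])

lemma sqc_infsum_le: "infsum sqc UNIV \<le> 1"
  by (rule infsum_le_finite_sums[OF sqc_summable]) (rule sqc_sum_le)

lemma sqc_prod_sum_le: "finite F \<Longrightarrow> sum (\<lambda>(i, j). sqc i * sqc j) F \<le> 1"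
proof -
  assume F: "finite F"
  obtain n where n1: "fst ` F \<subseteq> {..<n}" using F by (metis finite_imageI finite_nat_bounded)
  obtain m where m1: "snd ` F \<subseteq> {..<m}" using F by (metis finite_imageI finite_nat_bounded)
  have "F \<subseteq> {..<max n m} \<times> {..<max n m}" using n1 m1 by force
  then have "sum (\<lambda>(i, j). sqc i * sqc j) F \<le> (\<Sum>(i,j)\<in>{..<max n m} \<times> {..<max n m}. sqc i * sqc j)"
    by (intro sum_mono2) (auto intro: mult_nonneg_nonneg sqc_nonneg)
  also have "\<dots> = (sqs (max n m))\<^sup>2"
    unfolding sqs_def power2_eq_square sum_product sum.cartesian_product by simp
  also have "\<dots> \<le> 1" using sqs_le1 sqs_nonneg by (simp add: power_le_one)
  finally show ?thesis .
qed

lemma sqc_prod_summable: "(\<lambda>(i,j). sqc i * sqc j) summable_on UNIV"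
  by (rule nonneg_bdd_above_summable_on)
     (auto intro: mult_nonneg_nonneg sqc_nonneg sqc_prod_sum_le bdd_aboveI2[of _ _ 1])


definition contr :: "('a::complex_inner \<Rightarrow> 'a) \<Rightarrow> bool" where
  "contr D \<longleftrightarrow> bounded_clinear D \<and> (\<forall>x. norm (D x) \<le> norm x)"

definition Fop :: "('a::chilbert_space \<Rightarrow> 'a) \<Rightarrow> 'a \<Rightarrow> 'a" where
  "Fop D x = infsum (\<lambda>k. sqc k *\<^sub>R (D ^^ k) x) UNIV"

lemma contr_pow: "contr D \<Longrightarrow> norm ((D ^^ k) x) \<le> norm x"
proof (induction k)
  case 0 then show ?case by simp
next
  case (Suc k)
  have "norm (D ((D ^^ k) x)) \<le> norm ((D ^^ k) x)" using Suc.prems by (simp add: contr_def)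
  then show ?case using Suc by simp
qed

lemma sqc_vec_abs_summable:
  fixes v :: "nat \<Rightarrow> 'b::real_normed_vector"
  assumes "\<And>k. norm (v k) \<le> B"
  shows "(\<lambda>k. norm (sqc k *\<^sub>R v k)) summable_on UNIV"
proof (rule nonneg_bdd_above_summable_on)
  have B0: "0 \<le> B" using assms[of 0] norm_ge_zero order_trans by blast
  show "bdd_above (sum (\<lambda>k. norm (sqc k *\<^sub>R v k)) ` {F. F \<subseteq> UNIV \<and> finite F})"
  proof (rule bdd_aboveI2[of _ _ B])
    fix F :: "nat set" assume "F \<in> {F. F \<subseteq> UNIV \<and> finite F}"
    then have F: "finite F" by simp
    have "sum (\<lambda>k. norm (sqc k *\<^sub>R v k)) F \<le> sum (\<lambda>k. sqc k * B) F"
      by (rule sum_mono) (use assms sqc_nonneg in \<open>auto intro: mult_left_mono\<close>)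
    also have "\<dots> = sum sqc F * B" by (simp add: sum_distrib_right)
    also have "\<dots> \<le> 1 * B" by (rule mult_right_mono[OF sqc_sum_le[OF F] B0])
    finally show "sum (\<lambda>k. norm (sqc k *\<^sub>R v k)) F \<le> B" by simp
  qed
qed simp

lemma sqc_vec_summable:
  fixes v :: "nat \<Rightarrow> 'b::banach"
  assumes "\<And>k. norm (v k) \<le> B"
  shows "(\<lambda>k. sqc k *\<^sub>R v k) summable_on UNIV"
  by (rule abs_summable_summable, rule sqc_vec_abs_summable[where B=B]) (rule assms)

lemma Fop_has_sum:
  assumes "contr D"
  shows "((\<lambda>k. sqc k *\<^sub>R (D ^^ k) x) has_sum Fop D x) UNIV"
  unfolding Fop_def
  by (rule has_sum_infsum, rule sqc_vec_summable[of _ "norm x"]) (rule contr_pow[OF assms])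

lemma contr_pow_bcl: "contr D \<Longrightarrow> bounded_clinear (D ^^ k)"
  by (simp add: contr_def bcl_funpow)

lemma Fop_bcl:
  assumes D: "contr D"
  shows "bounded_clinear (Fop D)"
proof (rule bcl_intro)
  note H = Fop_has_sum[OF D]
  show "Fop D (x + y) = Fop D x + Fop D y" for x y
  proof -
    have "((\<lambda>k. sqc k *\<^sub>R (D ^^ k) x + sqc k *\<^sub>R (D ^^ k) y) has_sum (Fop D x + Fop D y)) UNIV"
      by (rule has_sum_add[OF H H])
    moreover have "(\<lambda>k. sqc k *\<^sub>R (D ^^ k) x + sqc k *\<^sub>R (D ^^ k) y) = (\<lambda>k. sqc k *\<^sub>R (D ^^ k) (x + y))"
      using bcl_add[OF contr_pow_bcl[OF D]] by (simp add: fun_eq_iff scaleR_add_right)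
    ultimately show ?thesis using H[of "x + y"] has_sum_unique by metis
  qed
  show "Fop D (scaleC c x) = scaleC c (Fop D x)" for c x
  proof -
    have "((\<lambda>k. scaleC c (sqc k *\<^sub>R (D ^^ k) x)) has_sum scaleC c (Fop D x)) UNIV"
      by (rule has_sum_bounded_linear[OF bounded_linear_scaleC H])
    moreover have "(\<lambda>k. scaleC c (sqc k *\<^sub>R (D ^^ k) x)) = (\<lambda>k. sqc k *\<^sub>R (D ^^ k) (scaleC c x))"
      using bcl_scaleC[OF contr_pow_bcl[OF D]]
      by (simp add: fun_eq_iff scaleR_scaleC scaleC_scaleC mult.commute)
    ultimately show ?thesis using H[of "scaleC c x"] has_sum_unique by metis
  qed
  show "norm (Fop D x) \<le> norm x * 1" for x
  proof -
    have "((\<lambda>k. sqc k * norm x) has_sum (infsum sqc UNIV * norm x)) UNIV"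
      by (rule has_sum_cmult_left, rule has_sum_infsum, rule sqc_summable)
    then have "norm (Fop D x) \<le> infsum sqc UNIV * norm x"
      by (rule norm_infsum_le[OF H]) (use contr_pow[OF D] sqc_nonneg in \<open>auto intro: mult_left_mono\<close>)
    also have "\<dots> \<le> 1 * norm x" by (rule mult_right_mono[OF sqc_infsum_le]) simp
    finally show ?thesis by simp
  qed
qed

lemma Fop_commute:
  assumes D: "contr D" and G: "bounded_clinear G" and GD: "\<And>x. G (D x) = D (G x)"
  shows "G (Fop D x) = Fop D (G x)"
proof -
  have pw: "G ((D ^^ k) y) = (D ^^ k) (G y)" for k y
    by (induction k) (simp_all add: GD)
  have "((\<lambda>k. G (sqc k *\<^sub>R (D ^^ k) x)) has_sum G (Fop D x)) UNIV"
    by (rule has_sum_bounded_linear[OF bcl_linear[OF G] Fop_has_sum[OF D]])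
  moreover have "(\<lambda>k. G (sqc k *\<^sub>R (D ^^ k) x)) = (\<lambda>k. sqc k *\<^sub>R (D ^^ k) (G x))"
    by (simp add: fun_eq_iff bcl_scaleR[OF G] pw)
  ultimately show ?thesis using Fop_has_sum[OF D, of "G x"] has_sum_unique by metis
qed

lemma has_sum_single1: "((\<lambda>k::nat. if k = 1 then v else 0) has_sum v) UNIV"
proof -
  have "((\<lambda>k::nat. if k = 1 then v else 0) has_sum v) {1}"
    by (rule has_sum_finiteI) auto
  then show ?thesis by (subst (asm) has_sum_cong_neutral[where T=UNIV]) auto
qed

lemma Fop_sq:
  assumes D: "contr D"
  shows "Fop D (Fop D x) = 2 *\<^sub>R Fop D x - D x"
proof -
  define v where "v i j = (sqc i * sqc j) *\<^sub>R (D ^^ (i + j)) x" for i j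
  note H = Fop_has_sum[OF D]
  have row: "((\<lambda>j. v i j) has_sum (sqc i *\<^sub>R (D ^^ i) (Fop D x))) UNIV" for i
  proof -
    have bl: "bounded_linear (\<lambda>y. sqc i *\<^sub>R (D ^^ i) y)"
      using bcl_linear[OF bcl_scale_op[OF contr_pow_bcl[OF D]]] .
    have "((\<lambda>j. sqc i *\<^sub>R (D ^^ i) (sqc j *\<^sub>R (D ^^ j) x)) has_sum (sqc i *\<^sub>R (D ^^ i) (Fop D x))) UNIV"
      by (rule has_sum_bounded_linear[OF bl H])
    moreover have "(\<lambda>j. sqc i *\<^sub>R (D ^^ i) (sqc j *\<^sub>R (D ^^ j) x)) = (\<lambda>j. v i j)"
      by (simp add: fun_eq_iff v_def bcl_scaleR[OF contr_pow_bcl[OF D]] funpow_add)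
    ultimately show ?thesis by simp
  qed
  have r: "infsum (v i) UNIV = sqc i *\<^sub>R (D ^^ i) (Fop D x)" for i
    using row[of i] by (simp add: infsumI)
  have e1: "Fop D (Fop D x) = infsum (\<lambda>i. infsum (\<lambda>j. v i j) UNIV) UNIV"
    using infsumI[OF H[of "Fop D x"]] by (simp add: r)
  have absv: "(\<lambda>(i,j). norm (v i j)) summable_on UNIV"
  proof (rule nonneg_bdd_above_summable_on)
    show "bdd_above (sum (\<lambda>(i,j). norm (v i j)) ` {F. F \<subseteq> UNIV \<and> finite F})"
    proof (rule bdd_aboveI2[of _ _ "norm x"])
      fix F :: "(nat \<times> nat) set" assume "F \<in> {F. F \<subseteq> UNIV \<and> finite F}"
      then have F: "finite F" by simp
      have "sum (\<lambda>(i,j). norm (v i j)) F \<le> sum (\<lambda>(i,j). sqc i * sqc j * norm x) F"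
        by (rule sum_mono) (use contr_pow[OF D] sqc_nonneg in \<open>auto simp: v_def intro!: mult_left_mono mult_nonneg_nonneg\<close>)
      also have "\<dots> = sum (\<lambda>(i,j). sqc i * sqc j) F * norm x"
        by (simp add: sum_distrib_right case_prod_beta)
      also have "\<dots> \<le> 1 * norm x" by (rule mult_right_mono[OF sqc_prod_sum_le[OF F]]) simp
      finally show "sum (\<lambda>(i,j). norm (v i j)) F \<le> norm x" by simp
    qed
  qed auto
  then have absv': "(\<lambda>p. norm ((\<lambda>(i,j). v i j) p)) summable_on UNIV"
    by (simp add: case_prod_unfold)
  have sv: "(\<lambda>(i,j). v i j) summable_on UNIV" by (rule abs_summable_summable[OF absv'])
  have e2: "infsum (\<lambda>i. infsum (\<lambda>j. v i j) UNIV) UNIV = infsum (\<lambda>(i,j). v i j) UNIV"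
    using infsum_Sigma'_banach[of v UNIV "\<lambda>_. UNIV"] sv by simp
  define S where "S = Sigma (UNIV::nat set) (\<lambda>k. {..k})"
  define p where "p = (\<lambda>(k::nat, i::nat). (i, k - i))"
  have bij: "bij_betw p S UNIV"
  proof (rule bij_betw_byWitness[where f'="\<lambda>(i,j). (i + j, i)"])
    show "\<forall>a\<in>S. (\<lambda>(i, j). (i + j, i)) (p a) = a" by (auto simp: S_def p_def)
    show "\<forall>a'\<in>UNIV. p ((\<lambda>(i, j). (i + j, i)) a') = a'" by (auto simp: p_def)
    show "p ` S \<subseteq> UNIV" by simp
    show "(\<lambda>(i, j). (i + j, i)) ` UNIV \<subseteq> S" by (auto simp: S_def)
  qed
  have comp: "(\<lambda>q. (\<lambda>(i,j). v i j) (p q)) = (\<lambda>(k,i). v i (k - i))"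
    by (auto simp: p_def fun_eq_iff)
  have e3: "infsum (\<lambda>(i,j). v i j) UNIV = infsum (\<lambda>(k,i). v i (k - i)) S"
    using infsum_reindex_bij_betw[OF bij, of "\<lambda>(i,j). v i j"] comp by simp
  have sS: "(\<lambda>(k,i). v i (k - i)) summable_on S"
    using summable_on_reindex_bij_betw[OF bij, of "\<lambda>(i,j). v i j"] comp sv by simp
  have e4: "infsum (\<lambda>(k,i). v i (k - i)) S = infsum (\<lambda>k. infsum (\<lambda>i. v i (k - i)) {..k}) UNIV"
    using infsum_Sigma'_banach[of "\<lambda>k i. v i (k - i)" UNIV "\<lambda>k. {..k}"] sS
    unfolding S_def by simp
  have inner: "infsum (\<lambda>i. v i (k - i)) {..k} = (2 * sqc k - (if k = 1 then 1 else 0)) *\<^sub>R (D ^^ k) x" for k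
  proof -
    have "infsum (\<lambda>i. v i (k - i)) {..k} = (\<Sum>i\<le>k. (sqc i * sqc (k - i)) *\<^sub>R (D ^^ k) x)"
      by (simp add: v_def)
    also have "\<dots> = (\<Sum>i\<le>k. sqc i * sqc (k - i)) *\<^sub>R (D ^^ k) x" by (simp add: scaleR_sum_left)
    finally show ?thesis by (simp add: sqc_conv)
  qed
  have last: "((\<lambda>k. (2 * sqc k - (if k = 1 then 1 else 0)) *\<^sub>R (D ^^ k) x) has_sum (2 *\<^sub>R Fop D x - D x)) UNIV"
  proof -
    have a: "((\<lambda>k. 2 *\<^sub>R (sqc k *\<^sub>R (D ^^ k) x)) has_sum 2 *\<^sub>R Fop D x) UNIV"
      by (rule has_sum_scaleR[OF H])
    have b: "((\<lambda>k::nat. - (if k = 1 then D x else 0)) has_sum (- D x)) UNIV"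
      unfolding has_sum_uminus minus_minus by (rule has_sum_single1)
    have "((\<lambda>k::nat. 2 *\<^sub>R (sqc k *\<^sub>R (D ^^ k) x) + - (if k = 1 then D x else 0)) has_sum (2 *\<^sub>R Fop D x + - D x)) UNIV"
      by (rule has_sum_add[OF a b])
    moreover have "(\<lambda>k. 2 *\<^sub>R (sqc k *\<^sub>R (D ^^ k) x) + - (if k = 1 then D x else 0)) =
        (\<lambda>k. (2 * sqc k - (if k = 1 then 1 else 0)) *\<^sub>R (D ^^ k) x)"
      by (auto simp: fun_eq_iff algebra_simps)
    ultimately show ?thesis by simp
  qed
  have "Fop D (Fop D x) = infsum (\<lambda>k. (2 * sqc k - (if k = 1 then 1 else 0)) *\<^sub>R (D ^^ k) x) UNIV"
    using e1 e2 e3 e4 inner by simp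
  also have "\<dots> = 2 *\<^sub>R Fop D x - D x" using last by (rule infsumI)
  finally show ?thesis .
qed


definition herm :: "('a::complex_inner \<Rightarrow> 'a) \<Rightarrow> bool" where
  "herm D \<longleftrightarrow> (\<forall>x y. cinner (D x) y = cinner x (D y))"

lemma herm_pow: "herm D \<Longrightarrow> herm (D ^^ k)"
proof (induction k)
  case 0 then show ?case by (simp add: herm_def)
next
  case (Suc k)
  have h1: "cinner (D u) v = cinner u (D v)" for u v using Suc.prems by (simp add: herm_def)
  have h2: "cinner ((D ^^ k) u) v = cinner u ((D ^^ k) v)" for u v using Suc.IH Suc.prems by (simp add: herm_def)
  show ?case unfolding herm_def
  proof (intro allI)
    fix x y
    have "cinner ((D ^^ Suc k) x) y = cinner (D ((D ^^ k) x)) y" by simp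
    also have "\<dots> = cinner x ((D ^^ k) (D y))" by (simp add: h1 h2)
    also have "(D ^^ k) (D y) = (D ^^ Suc k) y" by (simp add: funpow_swap1)
    finally show "cinner ((D ^^ Suc k) x) y = cinner x ((D ^^ Suc k) y)" .
  qed
qed

lemma herm_real: "herm D \<Longrightarrow> Im (cinner (D x) x) = 0"
proof -
  assume "herm D"
  then have "cinner (D x) x = cinner x (D x)" unfolding herm_def by blast
  also have "\<dots> = cnj (cinner (D x) x)" by (rule cinner_commute)
  finally have "cinner (D x) x = cnj (cinner (D x) x)" .
  then show ?thesis by (simp add: complex_eq_iff)
qed

lemma Fop_form:
  fixes D :: "'a::chilbert_space \<Rightarrow> 'a"
  assumes D: "contr D" and H: "herm D"
  shows "Im (cinner (Fop D x) x) = 0" "Re (cinner (Fop D x) x) \<le> (norm x)\<^sup>2"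
proof -
  have hs: "((\<lambda>k. cinner (sqc k *\<^sub>R (D ^^ k) x) x) has_sum cinner (Fop D x) x) UNIV"
    by (rule has_sum_bounded_linear[OF bounded_linear_cinner_left Fop_has_sum[OF D]])
  have tm: "cinner (sqc k *\<^sub>R (D ^^ k) x) x = of_real (sqc k) * cinner ((D ^^ k) x) x" for k
    by (simp add: cinner_scaleR_left)
  have imk: "Im (cinner ((D ^^ k) x) x) = 0" for k by (rule herm_real[OF herm_pow[OF H]])
  have "((\<lambda>k. Im (cinner (sqc k *\<^sub>R (D ^^ k) x) x)) has_sum Im (cinner (Fop D x) x)) UNIV"
    by (rule has_sum_Im[OF hs])
  moreover have "(\<lambda>k. Im (cinner (sqc k *\<^sub>R (D ^^ k) x) x)) = (\<lambda>k. 0)"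
    by (simp add: fun_eq_iff tm imk)
  ultimately show "Im (cinner (Fop D x) x) = 0"
    using has_sum_0_simp has_sum_unique by metis
  have re: "((\<lambda>k. Re (cinner (sqc k *\<^sub>R (D ^^ k) x) x)) has_sum Re (cinner (Fop D x) x)) UNIV"
    by (rule has_sum_Re[OF hs])
  have cmp: "((\<lambda>k. sqc k * (norm x)\<^sup>2) has_sum (infsum sqc UNIV * (norm x)\<^sup>2)) UNIV"
    by (rule has_sum_cmult_left, rule has_sum_infsum, rule sqc_summable)
  have le: "Re (cinner (sqc k *\<^sub>R (D ^^ k) x) x) \<le> sqc k * (norm x)\<^sup>2" for k
  proof -
    have "Re (cinner ((D ^^ k) x) x) \<le> cmod (cinner ((D ^^ k) x) x)" by (rule complex_Re_le_cmod)
    also have "\<dots> \<le> norm ((D ^^ k) x) * norm x" by (rule CS)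
    also have "\<dots> \<le> norm x * norm x" by (rule mult_right_mono[OF contr_pow[OF D]]) simp
    finally have "Re (cinner ((D ^^ k) x) x) \<le> (norm x)\<^sup>2" by (simp add: power2_eq_square)
    then show ?thesis using sqc_nonneg[of k] by (simp add: tm mult_left_mono)
  qed
  have "Re (cinner (Fop D x) x) \<le> infsum sqc UNIV * (norm x)\<^sup>2"
    by (rule has_sum_mono[OF re cmp le])
  also have "\<dots> \<le> 1 * (norm x)\<^sup>2" by (rule mult_right_mono[OF sqc_infsum_le]) simp
  finally show "Re (cinner (Fop D x) x) \<le> (norm x)\<^sup>2" by simp
qed

lemma sqrt_exists_unique:
  fixes A :: "'a::chilbert_space \<Rightarrow> 'a"
  assumes A: "pos_op A"
  shows "\<exists>!B. pos_op B \<and> B \<circ> B = A"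
proof -
  have Abcl: "bounded_clinear A" using A by (simp add: pos_op_def)
  obtain K where K: "K > 0" "\<forall>x. norm (A x) \<le> norm x * K" using bcl_bound[OF Abcl] by blast
  have Apos: "Im (cinner (A x) x) = 0" "0 \<le> Re (cinner (A x) x)" for x using A by (auto simp: pos_op_def)
  have AH: "cinner (A x) y = cinner x (A y)" for x y by (rule pos_op_hermitian[OF A])
  define D where "D x = x - (1/K) *\<^sub>R A x" for x
  have Dbcl: "bounded_clinear D"
    unfolding D_def by (rule bcl_diff_op[OF bcl_id bcl_scale_op[OF Abcl]])
  have DH: "herm D" unfolding herm_def D_def
    by (simp add: cinner_diff_left cinner_diff_right cinner_scaleR_left cinner_scaleR_right AH)
  have ReA: "Re (cinner (A x) x) \<le> K * (norm x)\<^sup>2" for x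
  proof -
    have "Re (cinner (A x) x) \<le> cmod (cinner (A x) x)" by (rule complex_Re_le_cmod)
    also have "\<dots> \<le> norm (A x) * norm x" by (rule CS)
    also have "\<dots> \<le> (norm x * K) * norm x" using K by (simp add: mult_right_mono)
    finally show ?thesis by (simp add: power2_eq_square mult_ac)
  qed
  have cD: "cinner (D x) x = cinner x x - of_real (1/K) * cinner (A x) x" for x
    by (simp add: D_def cinner_diff_left cinner_scaleR_left)
  have Dpos: "Im (cinner (D x) x) = 0 \<and> 0 \<le> Re (cinner (D x) x)" for x
  proof
    show "Im (cinner (D x) x) = 0" using Apos(1)[of x] cinner_self_real[of x] by (simp add: cD)
    have "Re (cinner (D x) x) = (norm x)\<^sup>2 - Re (cinner (A x) x) / K"
      by (simp add: cD Re_cinner_self)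
    moreover have "Re (cinner (A x) x) / K \<le> (norm x)\<^sup>2"
      using ReA[of x] K by (simp add: divide_le_eq mult.commute)
    ultimately show "0 \<le> Re (cinner (D x) x)" by simp
  qed
  have ReD: "Re (cinner (D x) x) \<le> (norm x)\<^sup>2" for x
  proof -
    have "Re (cinner (D x) x) = (norm x)\<^sup>2 - Re (cinner (A x) x) / K"
      by (simp add: cD Re_cinner_self)
    moreover have "0 \<le> Re (cinner (A x) x) / K" using Apos(2)[of x] K by simp
    ultimately show ?thesis by simp
  qed
  have Dcontr: "contr D" unfolding contr_def
  proof (intro conjI allI Dbcl)
    fix x
    have "(cmod (cinner (D x) (D x)))\<^sup>2 \<le> Re (cinner (D x) x) * Re (cinner (D (D x)) (D x))"
      by (rule gen_CS[OF Dbcl _ Dpos]) (use DH in \<open>simp add: herm_def\<close>)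
    also have "\<dots> \<le> (norm x)\<^sup>2 * (norm (D x))\<^sup>2"
      by (rule mult_mono[OF ReD ReD]) (use Dpos in auto)
    finally have "((norm (D x))\<^sup>2)\<^sup>2 \<le> (norm x)\<^sup>2 * (norm (D x))\<^sup>2"
      by (simp add: cinner_self norm_power)
    then have "(norm (D x))\<^sup>2 \<le> (norm x)\<^sup>2"
      by (cases "norm (D x) = 0") (auto simp: power2_eq_square mult_le_cancel_right)
    then show "norm (D x) \<le> norm x" by (rule power2_le_imp_le) simp
  qed
  define F where "F = Fop D"
  have Fbcl: "bounded_clinear F" unfolding F_def by (rule Fop_bcl[OF Dcontr])
  have FF: "F (F x) = 2 *\<^sub>R F x - D x" for x unfolding F_def by (rule Fop_sq[OF Dcontr])
  define B0 where "B0 x = x - F x" for x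
  have B0bcl: "bounded_clinear B0" unfolding B0_def by (rule bcl_diff_op[OF bcl_id Fbcl])
  define B where "B x = sqrt K *\<^sub>R B0 x" for x
  have Bbcl: "bounded_clinear B" unfolding B_def by (rule bcl_scale_op[OF B0bcl])
  have B0sq: "B0 (B0 x) = (1/K) *\<^sub>R A x" for x
  proof -
    have "B0 (B0 x) = B0 x - F (B0 x)" by (simp add: B0_def)
    also have "F (B0 x) = F x - F (F x)" by (simp add: B0_def bcl_diff[OF Fbcl])
    finally have "B0 (B0 x) = x - 2 *\<^sub>R F x + F (F x)" by (simp add: B0_def scaleR_2 algebra_simps)
    also have "\<dots> = x - D x" by (simp add: FF scaleR_2 algebra_simps)
    finally show ?thesis by (simp add: D_def)
  qed
  have Bsq: "B \<circ> B = A"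
  proof
    fix x
    have "(B \<circ> B) x = (sqrt K * sqrt K) *\<^sub>R B0 (B0 x)" by (simp add: B_def bcl_scaleR[OF B0bcl])
    also have "\<dots> = A x" using K by (simp add: B0sq)
    finally show "(B \<circ> B) x = A x" .
  qed
  have Bpos: "pos_op B" unfolding pos_op_def
  proof (intro conjI allI Bbcl)
    fix x
    have c: "cinner (B x) x = of_real (sqrt K) * (cinner x x - cinner (F x) x)"
      by (simp add: B_def B0_def cinner_scaleR_left cinner_diff_left)
    show "Im (cinner (B x) x) = 0"
      using Fop_form(1)[OF Dcontr DH, of x] cinner_self_real[of x] by (simp add: c F_def)
    show "0 \<le> Re (cinner (B x) x)"
      using Fop_form(2)[OF Dcontr DH, of x] K by (simp add: c F_def Re_cinner_self)
  qed
  have uniq: "B' = B" if B': "pos_op B'" "B' \<circ> B' = A" for B'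
  proof -
    have B'bcl: "bounded_clinear B'" using B' by (simp add: pos_op_def)
    have B'sq: "B' (B' x) = A x" for x using B'(2) by (metis comp_apply)
    have B'A: "B' (A x) = A (B' x)" for x using B'sq by metis
    have B'D: "B' (D x) = D (B' x)" for x
      by (simp add: D_def bcl_diff[OF B'bcl] bcl_scaleR[OF B'bcl] B'A)
    have B'F: "B' (F x) = F (B' x)" for x
      unfolding F_def by (rule Fop_commute[OF Dcontr B'bcl B'D])
    have B'B: "B' (B x) = B (B' x)" for x
      by (simp add: B_def B0_def bcl_scaleR[OF B'bcl] bcl_diff[OF B'bcl] B'F)
    have BB: "B (B x) = A x" for x using Bsq by (metis comp_apply)
    show "B' = B"
    proof
      fix x
      define y where "y = B x - B' x"
      have sum0: "B y + B' y = 0"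
        by (simp add: y_def bcl_diff[OF Bbcl] bcl_diff[OF B'bcl] BB B'sq B'B)
      have "Re (cinner (B y) y) + Re (cinner (B' y) y) = Re (cinner (B y + B' y) y)"
        by (simp add: cinner_add_left)
      also have "\<dots> = 0" by (simp add: sum0)
      finally have s: "Re (cinner (B y) y) + Re (cinner (B' y) y) = 0" .
      have p1: "0 \<le> Re (cinner (B y) y)" using Bpos by (simp add: pos_op_def)
      have p2: "0 \<le> Re (cinner (B' y) y)" using B'(1) by (simp add: pos_op_def)
      have By: "B y = 0" by (rule pos_zero_form[OF Bpos]) (use s p1 p2 in linarith)
      have B'y: "B' y = 0" by (rule pos_zero_form[OF B'(1)]) (use s p1 p2 in linarith)
      have "cinner y y = cinner (B x) y - cinner (B' x) y" by (simp add: y_def cinner_diff_left)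
      also have "\<dots> = cinner x (B y) - cinner x (B' y)"
        by (simp add: pos_op_hermitian[OF Bpos] pos_op_hermitian[OF B'(1)])
      also have "\<dots> = 0" by (simp add: By B'y)
      finally have "y = 0" by (simp add: cinner_self_eq_zero)
      then show "B' x = B x" by (simp add: y_def)
    qed
  qed
  show ?thesis using Bpos Bsq uniq by blast
qed

lemma op_sqrt:
  fixes A :: "'a::chilbert_space \<Rightarrow> 'a"
  assumes A: "pos_op A"
  shows "pos_op (op_sqrt A)" "\<And>x. op_sqrt A (op_sqrt A x) = A x"
proof -
  have "pos_op (op_sqrt A) \<and> op_sqrt A \<circ> op_sqrt A = A"
    unfolding op_sqrt_def by (rule theI'[OF sqrt_exists_unique[OF A]])
  then show "pos_op (op_sqrt A)" "\<And>x. op_sqrt A (op_sqrt A x) = A x"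
    by (auto simp: fun_eq_iff)
qed


lemma normA_sqrt:
  fixes A :: "'a::chilbert_space \<Rightarrow> 'a"
  assumes A: "pos_op A"
  shows "normA A z = norm (op_sqrt A z)"
proof -
  note Bp = op_sqrt[OF A]
  have "cinner (A z) z = cinner (op_sqrt A z) (op_sqrt A z)"
    using pos_op_hermitian[OF Bp(1), of "op_sqrt A z" z] Bp(2) by simp
  then show ?thesis by (simp add: normA_def Re_cinner_self)
qed

lemma kerB_closure:
  fixes B :: "'a::chilbert_space \<Rightarrow> 'a"
  assumes B: "pos_op B" and m: "m \<in> closure (range B)" and Bm: "B m = 0"
  shows "m = 0"
proof -
  obtain f where f: "\<forall>n. f n \<in> range B" "f \<longlonglongrightarrow> m" using m unfolding closure_sequential by blast
  have "cinner (f n) m = 0" for n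
  proof -
    obtain z where "f n = B z" using f(1) by blast
    then show ?thesis using pos_op_hermitian[OF B, of z m] Bm by simp
  qed
  then have "(\<lambda>n. cinner (f n) m) \<longlonglongrightarrow> 0" by simp
  moreover have "(\<lambda>n. cinner (f n) m) \<longlonglongrightarrow> cinner m m" by (rule tendsto_cinner_left[OF f(2)])
  ultimately have "cinner m m = 0" using LIMSEQ_unique by blast
  then show ?thesis by (simp add: cinner_self_eq_zero)
qed

lemma B_proj:
  fixes B :: "'a::chilbert_space \<Rightarrow> 'a"
  assumes B: "pos_op B" and Mdef: "M = closure (range B)"
  shows "B (proj M w) = B w"
proof -
  have Bbcl: "bounded_clinear B" using B by (simp add: pos_op_def)
  have MS1: "csubspace M" unfolding Mdef by (rule csubspace_closure[OF csubspace_range[OF Bbcl]])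
  have MS2: "closed M" unfolding Mdef by simp
  note MS = MS1 MS2
  define n where "n = w - proj M w"
  have inM: "B z \<in> M" for z unfolding Mdef by (rule closure_subset[THEN subsetD]) simp
  have o: "cinner (B z) n = 0" for z unfolding n_def by (rule proj(2)[OF MS inM])
  have "cinner z (B n) = 0" for z using pos_op_hermitian[OF B, of z n] o[of z] by simp
  then have "cinner (B n) (B n) = 0" by blast
  then have "B n = 0" by (simp add: cinner_self_eq_zero)
  then show ?thesis by (simp add: n_def bcl_diff[OF Bbcl])
qed

lemma sup_compare:
  fixes A R R' :: "'a::chilbert_space \<Rightarrow> 'a"
  assumes A: "pos_op A"
    and R: "bounded_clinear R" and R': "bounded_clinear R'"
    and adj: "\<And>u v. cinner (R u) v = cinner u (R' v)"
    and RB: "\<And>x. R (op_sqrt A x) = op_sqrt A (R x)"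
    and R'B: "\<And>x. R' (op_sqrt A x) = op_sqrt A (R' x)"
  defines "X \<equiv> {x. x \<in> closure (range A) \<and> norm (op_sqrt A x) = 1}"
  shows "Sup ((\<lambda>x. norm (R' (op_sqrt A x))) ` X) \<le> Sup ((\<lambda>x. norm (R (op_sqrt A x))) ` X)"
proof (cases "X = {}")
  case True
  then show ?thesis by simp
next
  case False
  define B where "B = op_sqrt A"
  note Bp = op_sqrt[OF A]
  have Bpos: "pos_op B" using Bp by (simp add: B_def)
  have Bbcl: "bounded_clinear B" using Bpos by (simp add: pos_op_def)
  have BB: "B (B x) = A x" for x using Bp by (simp add: B_def)
  have Abcl: "bounded_clinear A" using A by (simp add: pos_op_def)
  define s where "s = Sup ((\<lambda>x. norm (R (B x))) ` X)"
  obtain K where K: "K > 0" "\<forall>x. norm (R x) \<le> norm x * K" using bcl_bound[OF R] by blast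
  have bdd: "bdd_above ((\<lambda>x. norm (R (B x))) ` X)"
  proof (rule bdd_aboveI2[of _ _ K])
    fix x assume "x \<in> X"
    then have "norm (B x) = 1" by (simp add: X_def B_def)
    then show "norm (R (B x)) \<le> K" using K(2)[rule_format, of "B x"] by simp
  qed
  have inX: "norm (R (B x)) \<le> s" if "x \<in> X" for x
    unfolding s_def by (rule cSUP_upper[OF that bdd])
  have s0: "0 \<le> s" using False inX norm_ge_zero order_trans by blast
  define N where "N = closure (range A)"
  have NS1: "csubspace N" unfolding N_def by (rule csubspace_closure[OF csubspace_range[OF Abcl]])
  have NS2: "closed N" unfolding N_def by simp
  note NS = NS1 NS2
  have claim: "norm (R (B w)) \<le> s * norm (B w)" for w
  proof (cases "B w = 0")
    case True
    then show ?thesis using R by simp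
  next
    case False
    define q where "q = proj N w"
    have Bq: "B q = B w"
    proof -
      define n where "n = w - q"
      have inN: "A z \<in> N" for z unfolding N_def by (rule closure_subset[THEN subsetD]) simp
      have o: "cinner (A z) n = 0" for z unfolding n_def q_def by (rule proj(2)[OF NS inN])
      have "cinner (A n) n = 0" by (rule o)
      then have "cinner (B n) (B n) = 0" using pos_op_hermitian[OF Bpos, of "B n" n] BB by simp
      then have "B n = 0" by (simp add: cinner_self_eq_zero)
      then show ?thesis by (simp add: n_def bcl_diff[OF Bbcl])
    qed
    define c where "c = 1 / norm (B w)"
    have cpos: "c > 0" using False by (simp add: c_def)
    define x where "x = c *\<^sub>R q"
    have "x \<in> N" unfolding x_def q_def scaleR_scaleC
      by (rule csubspace_scaleC[OF NS(1) proj(1)[OF NS]])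
    moreover have Bx: "B x = c *\<^sub>R B w" by (simp add: x_def bcl_scaleR[OF Bbcl] Bq)
    moreover have "norm (B x) = 1" using False by (simp add: Bx c_def)
    ultimately have "x \<in> X" by (simp add: X_def N_def B_def)
    then have "norm (R (B x)) \<le> s" by (rule inX)
    then have "c * norm (R (B w)) \<le> s" using cpos by (simp add: Bx bcl_scaleR[OF R])
    then show ?thesis using False by (simp add: c_def field_simps)
  qed
  have "Sup ((\<lambda>x. norm (R' (B x))) ` X) \<le> s"
  proof (rule cSup_least)
    show "(\<lambda>x. norm (R' (B x))) ` X \<noteq> {}" using False by simp
    fix t assume "t \<in> (\<lambda>x. norm (R' (B x))) ` X"
    then obtain x where x: "x \<in> X" and t: "t = norm (R' (B x))" by blast
    have nBx: "norm (B x) = 1" using x by (simp add: X_def B_def)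
    define y where "y = B x"
    have Ry: "R' y = B (R' x)" unfolding y_def B_def by (rule R'B)
    have "(norm (R' y))\<^sup>2 = Re (cinner (R' y) (R' y))" by (simp add: Re_cinner_self)
    also have "cinner (R' y) (R' y) = cinner (R (R' y)) y" by (simp add: adj)
    also have "Re (cinner (R (R' y)) y) \<le> cmod (cinner (R (R' y)) y)" by (rule complex_Re_le_cmod)
    also have "\<dots> \<le> norm (R (R' y)) * norm y" by (rule CS)
    also have "\<dots> = norm (R (B (R' x)))" using nBx unfolding Ry unfolding y_def by simp
    also have "\<dots> \<le> s * norm (B (R' x))" by (rule claim)
    also have "\<dots> = s * norm (R' y)" by (simp add: Ry)
    finally have "norm (R' y) * norm (R' y) \<le> s * norm (R' y)" by (simp add: power2_eq_square)
    then have "norm (R' y) \<le> s" using s0 by (cases "norm (R' y) = 0") (auto simp: mult_le_cancel_right)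
    then show "t \<le> s" by (simp add: t y_def)
  qed
  then show ?thesis by (simp add: s_def B_def)
qed


theorem mainTheorem8:
  fixes A T :: "'a::chilbert_space \<Rightarrow> 'a"
  assumes "pos_op A" and "A \<noteq> (\<lambda>_. 0)"
    and "in_BA_half A T" and "T \<circ> op_sqrt A = op_sqrt A \<circ> T"
  shows "rA A T = rA A (diamond A T)"
proof -
  note A = assms(1)
  define B where "B = op_sqrt A"
  note Bp = op_sqrt[OF A]
  have Bpos: "pos_op B" using Bp by (simp add: B_def)
  have Bbcl: "bounded_clinear B" using Bpos by (simp add: pos_op_def)
  have BH: "cinner (B u) v = cinner u (B v)" for u v by (rule pos_op_hermitian[OF Bpos])
  have Tbcl: "bounded_clinear T" using assms(3) by (simp add: in_BA_half_def)
  have TB: "T (B x) = B (T x)" for x using fun_cong[OF assms(4), of x] by (simp add: B_def)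
  define Ts where "Ts = cadjoint T"
  have Tsbcl: "bounded_clinear Ts" unfolding Ts_def by (rule adjoint_bcl[OF Tbcl])
  have adjT: "cinner (T u) v = cinner u (Ts v)" for u v unfolding Ts_def by (rule adjoint[OF Tbcl])
  have TsB: "Ts (B x) = B (Ts x)" for x
  proof (rule cinner_ext')
    fix z
    have "cinner z (Ts (B x)) = cinner (T z) (B x)" by (simp add: adjT)
    also have "\<dots> = cinner (B (T z)) x" by (simp add: BH)
    also have "\<dots> = cinner (T (B z)) x" by (simp add: TB)
    also have "\<dots> = cinner (B z) (Ts x)" by (simp add: adjT)
    also have "\<dots> = cinner z (B (Ts x))" by (simp add: BH)
    finally show "cinner z (Ts (B x)) = cinner z (B (Ts x))" .
  qed
  define M where "M = closure (range B)"
  have MS1: "csubspace M" unfolding M_def by (rule csubspace_closure[OF csubspace_range[OF Bbcl]])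
  have MS2: "closed M" unfolding M_def by simp
  note MS = MS1 MS2
  define S where "S x = proj M (Ts x)" for x
  have Sbcl: "bounded_clinear S" unfolding S_def by (rule bcl_comp[OF proj_bcl[OF MS] Tsbcl])
  have BS: "B (S x) = Ts (B x)" for x
    unfolding S_def using B_proj[OF Bpos M_def] TsB by simp
  have Sprops: "bounded_clinear S \<and> Ts \<circ> B = B \<circ> S \<and> range S \<subseteq> closure (range B)"
    using Sbcl BS proj(1)[OF MS] by (auto simp: fun_eq_iff S_def M_def)
  have diam: "diamond A T = S"
    unfolding diamond_def B_def[symmetric] Ts_def[symmetric]
  proof (rule the_equality)
    show "bounded_clinear S \<and> Ts \<circ> B = B \<circ> S \<and> range S \<subseteq> closure (range B)" by (rule Sprops)
    fix S' assume S': "bounded_clinear S' \<and> Ts \<circ> B = B \<circ> S' \<and> range S' \<subseteq> closure (range B)"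
    show "S' = S"
    proof
      fix x
      have inM: "S' x - S x \<in> M"
        using csubspace_diff[OF MS1, of "S' x" "S x"] S' Sprops unfolding M_def by blast
      have "B (S' x) = Ts (B x)" using S' by (metis comp_apply)
      then have "B (S' x - S x) = 0" by (simp add: bcl_diff[OF Bbcl] BS)
      then have "S' x - S x = 0" by (rule kerB_closure[OF Bpos inM[unfolded M_def]])
      then show "S' x = S x" by simp
    qed
  qed
  have BSn: "B ((S ^^ n) x) = (Ts ^^ n) (B x)" for n x
    by (induction n) (simp_all add: BS)
  have BTn: "B ((T ^^ n) x) = (T ^^ n) (B x)" for n x
    by (induction n) (simp_all add: TB[symmetric])
  have BTsn: "B ((Ts ^^ n) x) = (Ts ^^ n) (B x)" for n x
    by (induction n) (simp_all add: TsB[symmetric])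
  have adjn: "cinner ((T ^^ n) u) v = cinner u ((Ts ^^ n) v)" for n u v
  proof (induction n arbitrary: u v)
    case 0 then show ?case by simp
  next
    case (Suc n)
    have "cinner ((T ^^ Suc n) u) v = cinner (T ((T ^^ n) u)) v" by simp
    also have "\<dots> = cinner u ((Ts ^^ n) (Ts v))" by (simp add: adjT Suc.IH)
    also have "(Ts ^^ n) (Ts v) = (Ts ^^ Suc n) v" by (simp add: funpow_swap1)
    finally show ?case .
  qed
  have adjn': "cinner ((Ts ^^ n) u) v = cinner u ((T ^^ n) v)" for n u v
    by (metis adjn cinner_commute)
  define X where "X = {x. x \<in> closure (range A) \<and> norm (op_sqrt A x) = 1}"
  have opT: "opnormA A (T ^^ n) = Sup ((\<lambda>x. norm ((T ^^ n) (op_sqrt A x))) ` X)" for n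
  proof -
    have "{normA A ((T ^^ n) x) |x. x \<in> closure (range A) \<and> normA A x = 1} =
          (\<lambda>x. norm ((T ^^ n) (op_sqrt A x))) ` X"
      by (auto simp: X_def normA_sqrt[OF A] BTn[unfolded B_def])
    then show ?thesis by (simp add: opnormA_def)
  qed
  have opS: "opnormA A (S ^^ n) = Sup ((\<lambda>x. norm ((Ts ^^ n) (op_sqrt A x))) ` X)" for n
  proof -
    have "{normA A ((S ^^ n) x) |x. x \<in> closure (range A) \<and> normA A x = 1} =
          (\<lambda>x. norm ((Ts ^^ n) (op_sqrt A x))) ` X"
      by (auto simp: X_def normA_sqrt[OF A] BSn[unfolded B_def])
    then show ?thesis by (simp add: opnormA_def)
  qed
  have eq: "opnormA A (T ^^ n) = opnormA A (S ^^ n)" for n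
  proof -
    have Tn: "bounded_clinear (T ^^ n)" by (rule bcl_funpow[OF Tbcl])
    have Tsn: "bounded_clinear (Ts ^^ n)" by (rule bcl_funpow[OF Tsbcl])
    have c1: "(T ^^ n) (op_sqrt A x) = op_sqrt A ((T ^^ n) x)" for x using BTn[of n x] by (simp add: B_def)
    have c2: "(Ts ^^ n) (op_sqrt A x) = op_sqrt A ((Ts ^^ n) x)" for x using BTsn[of n x] by (simp add: B_def)
    have "Sup ((\<lambda>x. norm ((Ts ^^ n) (op_sqrt A x))) ` X) \<le> Sup ((\<lambda>x. norm ((T ^^ n) (op_sqrt A x))) ` X)"
      unfolding X_def by (rule sup_compare[OF A Tn Tsn adjn c1 c2])
    moreover have "Sup ((\<lambda>x. norm ((T ^^ n) (op_sqrt A x))) ` X) \<le> Sup ((\<lambda>x. norm ((Ts ^^ n) (op_sqrt A x))) ` X)"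
      unfolding X_def by (rule sup_compare[OF A Tsn Tn adjn' c2 c1])
    ultimately show ?thesis by (simp add: opT opS)
  qed
  show ?thesis unfolding rA_def diam by (simp add: eq)
qed

end
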